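(* In the setting described in the context, for every $1\le i\le n/2$ and every $1\le j\le 2(n-1)$, $$\mathbb{E}[d_i(j)]\le 2\,\mathbb{E}[d_1(j)].$$
   Context: Let $n\ge4$ be even and let $d$ be a symmetric distance function satisfying the triangle inequality on the vertex set $\{1,\dots,n\}$ of the complete graph $G$. Let $s(v)=\sum_{u\ne v}d(u,v)$ and $\Delta=\sum_v s(v)$. A vertex minimizing $s$ is given the label $n$. Let $T'$ be a Hamiltonian cycle on the remaining $n-1$ vertices, with cyclic order $v_0,v_1,\dots,v_{n-2}$. Choose $\rho\in\{0,1,\dots,n-2\}$ uniformly at random and give vertex $v_{(p-1+\rho)\bmod (n-1)}$ the label $p$, for $p=1,\dots,n-1$; write $d(p,q)$ for the distance between the vertices labeled $p$ and $q$. All label arithmetic for labels in $\{1,\dots,n-1\}$ is modulo $n-1$, with representatives in $\{1,\dots,n-1\}$. Let $m=n/2$. For a "first-season day" $j\in\{1,\dots,n-1\}$ put $c_j\equiv m\,j \pmod{n-1}$; on that day the games (pairs of labels) are: game $1$ is $\{n,c_j\}$, and for $2\le i\le m$, game $i$ is $\{c_j+a_i,\,c_j-a_i\}$, where $a_i\in\{1,\dots,n-2\}$ is the unique element with $2a_i\equiv i-1\pmod{n-1}$ (so the two labels in game $i$ differ by $\pm(i-1)$ modulo $n-1$). The schedule has $2(n-1)$ days: days $1,\dots,n-1$ are the first-season days $1,\dots,n-1$, and days $n,n+1,\dots,2n-2$ repeat (with home venues reversed, irrelevant for distances) the games of first-season days $n-2,\,n-1,\,1,\,2,\dots,n-3$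 in this order. For $1\le i\le m$ and $1\le j\le 2(n-1)$, $d_i(j)$ denotes the distance between the two teams of game $i$ on day $j$. Expectations $\mathbb{E}$ are over the random $\rho$. *)

theory Defs
  imports Complex_Main "HOL-Number_Theory.Cong"
begin

definition svtx :: "nat \<Rightarrow> (nat \<Rightarrow> nat \<Rightarrow> real) \<Rightarrow> nat \<Rightarrow> real" where
  "svtx n d v = (\<Sum>u\<in>{1..n} - {v}. d u v)"

definition lrep :: "nat \<Rightarrow> int \<Rightarrow> int" where
  "lrep n x = (x - 1) mod (int n - 1) + 1"

text \<open>Vertex carrying label p (p in 1..n), for rotation rho; the cycle T' is
  cyc 0, ..., cyc (n-2), and vn is the vertex labeled n.\<close>
definition vlab :: "nat \<Rightarrow> nat \<Rightarrow> (nat \<Rightarrow> nat) \<Rightarrow> nat \<Rightarrow> int \<Rightarrow> nat" where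
  "vlab n vn cyc \<rho> p =
     (if p = int n then vn else cyc (nat ((p - 1 + int \<rho>) mod (int n - 1))))"

definition cday :: "nat \<Rightarrow> nat \<Rightarrow> int" where
  "cday n j = lrep n (int (n div 2) * int j)"

definition agame :: "nat \<Rightarrow> nat \<Rightarrow> int" where
  "agame n i = (THE a. a \<in> {1..int n - 2} \<and> [2 * a = int i - 1] (mod (int n - 1)))"

text \<open>The two labels of game i on first-season day j.\<close>
definition game :: "nat \<Rightarrow> nat \<Rightarrow> nat \<Rightarrow> int \<times> int" where
  "game n j i = (if i = 1 then (int n, cday n j)
                 else (lrep n (cday n j + agame n i), lrep n (cday n j - agame n i)))"

text \<open>First-season day whose games are played on schedule day j (1 \<le> j \<le> 2(n-1)).\<close>
definition fsday :: "nat \<Rightarrow> nat \<Rightarrow> nat" where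
  "fsday n j = (if j \<le> n - 1 then j
                else if j = n then n - 2
                else if j = n + 1 then n - 1
                else j - n - 1)"

definition dgame :: "nat \<Rightarrow> (nat \<Rightarrow> nat \<Rightarrow> real) \<Rightarrow> nat \<Rightarrow> (nat \<Rightarrow> nat) \<Rightarrow> nat \<Rightarrow> nat \<Rightarrow> nat \<Rightarrow> real" where
  "dgame n d vn cyc \<rho> i j =
     (let (p, q) = game n (fsday n j) i in d (vlab n vn cyc \<rho> p) (vlab n vn cyc \<rho> q))"

text \<open>Expectation over rho uniform in {0..n-2}.\<close>
definition Edgame :: "nat \<Rightarrow> (nat \<Rightarrow> nat \<Rightarrow> real) \<Rightarrow> nat \<Rightarrow> (nat \<Rightarrow> nat) \<Rightarrow> nat \<Rightarrow> nat \<Rightarrow> real" where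
  "Edgame n d vn cyc i j = (\<Sum>\<rho><n - 1. dgame n d vn cyc \<rho> i j) / real (n - 1)"

end

theory Submission
  imports Defs
begin

lemma rot_sum:
  fixes f :: "nat \<Rightarrow> real" and m :: nat and x :: int
  assumes "m \<ge> 1"
  shows "(\<Sum>\<rho><m. f (nat ((x + int \<rho>) mod int m))) = (\<Sum>k<m. f k)"
proof -
  let ?g = "\<lambda>\<rho>::nat. nat ((x + int \<rho>) mod int m)"
  have inj: "inj_on ?g {..<m}"
  proof (rule inj_onI)
    fix a b assume a: "a \<in> {..<m}" and b: "b \<in> {..<m}" and e: "?g a = ?g b"
    have "(x + int a) mod int m = (x + int b) mod int m"
      using e assms by (simp add: nat_eq_iff2)
    hence "[x + int a = x + int b] (mod int m)" by (simp add: cong_def)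
    hence "[int a = int b] (mod int m)" by (metis add.commute cong_add_rcancel)
    hence "int a mod int m = int b mod int m" by (simp add: cong_def)
    thus "a = b" using a b by simp
  qed
  have sub: "?g ` {..<m} \<subseteq> {..<m}"
    using assms by (auto simp: nat_less_iff)
  have img: "?g ` {..<m} = {..<m}"
    by (rule card_subset_eq) (use inj sub card_image[OF inj] in auto)
  have "(\<Sum>\<rho><m. f (?g \<rho>)) = sum f (?g ` {..<m})"
    by (rule sum.reindex[OF inj, symmetric, unfolded comp_def])
  thus ?thesis using img by simp
qed

lemma lrep_range: "int n \<ge> 2 \<Longrightarrow> 1 \<le> lrep n x \<and> lrep n x \<le> int n - 1"
proof -
  assume h: "int n \<ge> 2"
  have "(x - 1) mod (int n - 1) < int n - 1" using h by (intro pos_mod_bound) simp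
  moreover have "(x - 1) mod (int n - 1) \<ge> 0" using h by (intro pos_mod_sign) simp
  ultimately show ?thesis unfolding lrep_def by simp
qed

theorem lemma8:
  fixes n :: nat and d :: "nat \<Rightarrow> nat \<Rightarrow> real" and vn :: nat and cyc :: "nat \<Rightarrow> nat"
  assumes "n \<ge> 4" and "even n"
    and nonneg: "\<And>u v. u \<in> {1..n} \<Longrightarrow> v \<in> {1..n} \<Longrightarrow> 0 \<le> d u v"
    and sym: "\<And>u v. u \<in> {1..n} \<Longrightarrow> v \<in> {1..n} \<Longrightarrow> d u v = d v u"
    and tri: "\<And>u v w. u \<in> {1..n} \<Longrightarrow> v \<in> {1..n} \<Longrightarrow> w \<in> {1..n} \<Longrightarrow> d u w \<le> d u v + d v w"
    and vn: "vn \<in> {1..n}" and vnmin: "\<And>v. v \<in> {1..n} \<Longrightarrow> svtx n d vn \<le> svtx n d v"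
    and cyc: "bij_betw cyc {0..<n - 1} ({1..n} - {vn})"
    and i: "1 \<le> i" "i \<le> n div 2"
    and j: "1 \<le> j" "j \<le> 2 * (n - 1)"
  shows "Edgame n d vn cyc i j \<le> 2 * Edgame n d vn cyc 1 j"
proof -
  define m where "m = n - 1"
  have m1: "m \<ge> 1" using assms(1) unfolding m_def by simp
  have mi: "int m = int n - 1" using assms(1) unfolding m_def by simp
  have cycin: "\<And>k. k < m \<Longrightarrow> cyc k \<in> {1..n}"
  proof -
    fix k assume "k < m"
    hence "cyc k \<in> cyc ` {0..<n - 1}" unfolding m_def by simp
    thus "cyc k \<in> {1..n}" using cyc unfolding bij_betw_def by blast
  qed
  have vlin: "\<And>\<rho> p. vlab n vn cyc \<rho> p \<in> {1..n}"
  proof -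
    fix \<rho> p
    have "nat ((p - 1 + int \<rho>) mod (int n - 1)) < m"
      using m1 mi by (simp add: nat_less_iff)
    thus "vlab n vn cyc \<rho> p \<in> {1..n}" unfolding vlab_def using vn cycin by auto
  qed
  define S where "S = (\<Sum>k<m. d (cyc k) vn)"
  have rot: "(\<Sum>\<rho><m. d (vlab n vn cyc \<rho> p) vn) = S" if "p \<noteq> int n" for p
  proof -
    have "(\<Sum>\<rho><m. d (vlab n vn cyc \<rho> p) vn)
        = (\<Sum>\<rho><m. (\<lambda>k. d (cyc k) vn) (nat ((p - 1 + int \<rho>) mod int m)))"
      using that mi by (simp add: vlab_def)
    also have "\<dots> = S" unfolding S_def by (rule rot_sum[OF m1])
    finally show ?thesis .
  qed
  have n2: "int n \<ge> 2" using assms(1) by simp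
  have ne: "lrep n x \<noteq> int n" for x using lrep_range[OF n2, of x] by auto
  have E1: "(\<Sum>\<rho><m. dgame n d vn cyc \<rho> 1 j) = S"
  proof -
    have "(\<Sum>\<rho><m. dgame n d vn cyc \<rho> 1 j)
        = (\<Sum>\<rho><m. d (vlab n vn cyc \<rho> (cday n (fsday n j))) vn)"
      apply (rule sum.cong, simp)
      unfolding dgame_def game_def
      using sym[OF vn vlin] by (simp add: vlab_def)
    also have "\<dots> = S" by (rule rot) (simp add: cday_def ne)
    finally show ?thesis .
  qed
  have Ei: "(\<Sum>\<rho><m. dgame n d vn cyc \<rho> i j) \<le> 2 * S"
  proof (cases "i = 1")
    case True
    have "0 \<le> S" unfolding S_def using nonneg cycin vn by (auto intro: sum_nonneg)
    thus ?thesis using E1 True by simp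
  next
    case False
    obtain p q where pq: "game n (fsday n j) i = (p, q)" by (cases "game n (fsday n j) i")
    have pn: "p \<noteq> int n" and qn: "q \<noteq> int n"
      using pq False ne unfolding game_def by auto
    have "(\<Sum>\<rho><m. dgame n d vn cyc \<rho> i j)
        \<le> (\<Sum>\<rho><m. d (vlab n vn cyc \<rho> p) vn + d (vlab n vn cyc \<rho> q) vn)"
    proof (rule sum_mono)
      fix \<rho> assume "\<rho> \<in> {..<m}"
      have "d (vlab n vn cyc \<rho> p) (vlab n vn cyc \<rho> q)
          \<le> d (vlab n vn cyc \<rho> p) vn + d vn (vlab n vn cyc \<rho> q)"
        by (rule tri[OF vlin vn vlin])
      thus "dgame n d vn cyc \<rho> i j
          \<le> d (vlab n vn cyc \<rho> p) vn + d (vlab n vn cyc \<rho> q) vn"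
        unfolding dgame_def pq using sym[OF vn vlin] by simp
    qed
    also have "\<dots> = 2 * S" using rot[OF pn] rot[OF qn] by (simp add: sum.distrib)
    finally show ?thesis .
  qed
  have mpos: "real (n - 1) > 0" using m1 m_def by simp
  show ?thesis
    unfolding Edgame_def m_def[symmetric] using Ei E1 mpos m_def
    by (simp add: divide_right_mono)
qed

end
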